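(* Let $q$ be a prime number, $l\ge 2$ an integer, and $\alpha=\alpha_1/\alpha_2\in\mathbb{Q}\text{-}\mathcal{KS}(q^{l})$ with $\gcd(\alpha_1,q)=1$. Then $$1+q-q^{l-1}\le\alpha\le q^{l-1}+q-1.$$
   Context: Every nonzero rational $\alpha$ is written $\alpha=\alpha_1/\alpha_2$ with $\alpha_1\in\mathbb{Z}$, $\alpha_2$ a positive integer and $\gcd(\alpha_1,\alpha_2)=1$. For an integer $N\ge 2$ and a nonzero rational $\alpha=\alpha_1/\alpha_2$, $N$ is called an $\alpha$-Korselt number if $N\neq\alpha$ and $\alpha_2p-\alpha_1$ divides $\alpha_2N-\alpha_1$ (in $\mathbb{Z}$) for every prime divisor $p$ of $N$. $\mathbb{Q}\text{-}\mathcal{KS}(N)$ is the set of all $\beta\in\mathbb{Q}\setminus\{0,N\}$ such that $N$ is a $\beta$-Korselt number. *)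

theory Defs
  imports Complex_Main "HOL-Computational_Algebra.Primes"
begin

definition rat_num :: "rat \<Rightarrow> int" where "rat_num a = fst (quotient_of a)"
definition rat_den :: "rat \<Rightarrow> int" where "rat_den a = snd (quotient_of a)"

definition korselt :: "nat \<Rightarrow> rat \<Rightarrow> bool" where
  "korselt N \<alpha> \<longleftrightarrow> N \<ge> 2 \<and> \<alpha> \<noteq> 0 \<and> \<alpha> \<noteq> of_nat N \<and>
     (\<forall>p. prime p \<and> p dvd N \<longrightarrow>
        (rat_den \<alpha> * int p - rat_num \<alpha>) dvd (rat_den \<alpha> * int N - rat_num \<alpha>))"

definition QKS :: "nat \<Rightarrow> rat set" where
  "QKS N = {\<beta>. \<beta> \<noteq> 0 \<and> \<beta> \<noteq> of_nat N \<and> korselt N \<beta>}"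

end

theory Submission
  imports Defs
begin

theorem proposition2p4:
  fixes q l :: nat and \<alpha> :: rat
  assumes "prime q" and "l \<ge> 2" and "\<alpha> \<in> QKS (q ^ l)"
    and "gcd (rat_num \<alpha>) (int q) = 1"
  shows "1 + of_nat q - of_nat q ^ (l - 1) \<le> \<alpha> \<and> \<alpha> \<le> of_nat q ^ (l - 1) + of_nat q - 1"
proof -
  define a where "a = rat_num \<alpha>"
  define b where "b = rat_den \<alpha>"
  have qa: "quotient_of \<alpha> = (a, b)" unfolding a_def b_def rat_num_def rat_den_def by simp
  have bpos: "b > 0" using quotient_of_denom_pos[OF qa] .
  have cab: "coprime a b" using quotient_of_coprime[OF qa] .
  have al: "\<alpha> = of_int a / of_int b" using quotient_of_div[OF qa] .
  have q2: "q \<ge> 2" using assms(1) prime_ge_2_nat by blast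
  have qp: "prime (int q)" using assms(1) by simp
  define Q where "Q = int q ^ (l - 1)"
  have lS: "l = Suc (l - 1)" using assms(2) by simp
  have ql: "int q ^ l = int q * Q" unfolding Q_def by (subst lS, simp only: power_Suc)
  have "int q ^ 1 \<le> int q ^ (l - 1)" by (rule power_increasing) (use assms(2) q2 in auto)
  hence Qge: "Q \<ge> int q" unfolding Q_def by simp
  have Qpos: "Q - 1 > 0" using Qge q2 by linarith
  define d where "d = b * int q - a"
  have kor: "korselt (q ^ l) \<alpha>" using assms(3) unfolding QKS_def by simp
  have "d dvd b * int (q ^ l) - a"
  proof -
    have "q dvd q ^ l" using assms(2) by simp
    thus ?thesis using kor assms(1) unfolding korselt_def d_def a_def b_def by blast
  qed
  hence "d dvd (b * int (q ^ l) - a) - d" by simp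
  moreover have "(b * int (q ^ l) - a) - d = (b * int q) * (Q - 1)"
    unfolding d_def using ql by (simp add: algebra_simps)
  ultimately have dv: "d dvd (b * int q) * (Q - 1)" by simp
  have aeq: "a = b * int q - d" unfolding d_def by simp
  have cq: "coprime a (int q)" using assms(4) a_def by (simp add: coprime_iff_gcd_eq_1)
  have c1: "coprime d b"
  proof (rule coprimeI)
    fix c assume h: "c dvd d" "c dvd b"
    hence "c dvd b * int q - d" by (simp add: dvd_diff)
    hence "c dvd a" using aeq by simp
    thus "is_unit c" using cab h(2) coprime_common_divisor by blast
  qed
  have c2: "coprime d (int q)"
  proof (rule coprimeI)
    fix c assume h: "c dvd d" "c dvd int q"
    hence "c dvd b * int q - d" by (simp add: dvd_diff)
    hence "c dvd a" using aeq by simp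
    thus "is_unit c" using cq h(2) coprime_common_divisor by blast
  qed
  have "coprime d (b * int q)" using c1 c2 by simp
  hence dQ: "d dvd Q - 1" using dv coprime_dvd_mult_right_iff by blast
  have "\<bar>d\<bar> \<le> Q - 1" using dvd_imp_le_int[OF _ dQ] Qpos by simp
  hence h1: "a \<le> b * int q + (Q - 1)" and h2: "a \<ge> b * int q - (Q - 1)" unfolding d_def by auto
  have u: "a \<le> (Q + int q - 1) * b"
  proof -
    have "(Q - 1) \<le> (Q - 1) * b" using Qpos bpos by simp
    thus ?thesis using h1 by (simp add: algebra_simps)
  qed
  have lo: "a \<ge> (1 + int q - Q) * b"
  proof -
    have "(Q - 1) \<le> (Q - 1) * b" using Qpos bpos by simp
    thus ?thesis using h2 by (simp add: algebra_simps)
  qed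
  have "of_int a \<le> (of_int ((Q + int q - 1) * b) :: rat)" using u by (simp only: of_int_le_iff)
  hence U: "\<alpha> \<le> of_int (Q + int q - 1)" unfolding al using bpos by (simp add: divide_le_eq)
  have "of_int a \<ge> (of_int ((1 + int q - Q) * b) :: rat)" using lo by (simp only: of_int_le_iff)
  hence L: "\<alpha> \<ge> of_int (1 + int q - Q)" unfolding al using bpos by (simp add: le_divide_eq)
  show ?thesis using U L unfolding Q_def by simp
qed

end
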